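(* Let $N$ be a Poisson process on $[0,\infty)$ with intensity $\lambda>0$, with points $0<X_1<X_2<\cdots$, and let $\epsilon>0$. For a positive integer $m$ let $M^m_{\beta_0}(x)=\mathbb{E}[\beta_0(x)^m]$. For $s>0$ set $\alpha=\frac{e^{\epsilon\lambda}}{\lambda}\,s\,e^{\epsilon s}$. Then $$\int_0^\infty e^{-sx}M^m_{\beta_0}(x)\,dx=\frac{\alpha}{s(\alpha+1)}\,\mathrm{Li}_{-m}\!\left(\frac{1}{\alpha+1}\right),$$ the series defining the right-hand side being convergent since $\alpha>0$.
   Context: A cluster is a maximal set of consecutive points $X_j,\dots,X_k$ with $X_{l+1}-X_l\le\epsilon$ for $j\le l<k$; its end is $X_k+\epsilon$. $\beta_0(x)$ is the number of clusters whose end is $\le x$. The polylogarithm is $\mathrm{Li}_t(z)=\sum_{k=1}^\infty z^k/k^t$ for $|z|<1$. *)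

theory Defs
  imports "HOL-Probability.Probability"
begin

text \<open>Points of the Poisson process on [0,inf) with intensity lam, realised through
i.i.d. Exp(lam) inter-arrival times T 0, T 1, ...: the k-th point (k >= 1) is
X k = T 0 + ... + T (k-1), so 0 < X 1 < X 2 < ... almost surely.\<close>
definition poisson_points :: "(nat \<Rightarrow> 'a \<Rightarrow> real) \<Rightarrow> 'a \<Rightarrow> nat \<Rightarrow> real" where
  "poisson_points T \<omega> k = (\<Sum>i<k. T i \<omega>)"

definition is_cluster :: "(nat \<Rightarrow> real) \<Rightarrow> real \<Rightarrow> nat \<Rightarrow> nat \<Rightarrow> bool" where
  "is_cluster X eps j k \<longleftrightarrow> 1 \<le> j \<and> j \<le> k \<and>
     (\<forall>l. j \<le> l \<and> l < k \<longrightarrow> X (Suc l) - X l \<le> eps) \<and>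
     (j = 1 \<or> X j - X (j - 1) > eps) \<and>
     X (Suc k) - X k > eps"

text \<open>The end of the cluster X j..X k is X k + eps; beta0 x counts clusters with end <= x.\<close>
definition beta0 :: "(nat \<Rightarrow> real) \<Rightarrow> real \<Rightarrow> real \<Rightarrow> nat" where
  "beta0 X eps x = card {(j, k). is_cluster X eps j k \<and> X k + eps \<le> x}"

definition polylog :: "real \<Rightarrow> real \<Rightarrow> real" where
  "polylog t z = (\<Sum>k. z ^ Suc k / real (Suc k) powr t)"

end

theory Submission
  imports Defs
begin


lemma cluster_unique:
  assumes "is_cluster X eps j k" "is_cluster X eps j' k"
  shows "j = j'"
proof (rule ccontr)
  assume ne: "j \<noteq> j'"
  { fix a b assume A: "is_cluster X eps a k" "is_cluster X eps b k" "a < b"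
    then have "b \<noteq> 1" by (auto simp: is_cluster_def)
    with A have g: "X b - X (b - 1) > eps" by (auto simp: is_cluster_def)
    have "a \<le> b - 1" "b - 1 < k" using A by (auto simp: is_cluster_def)
    with A(1) have "X (Suc (b - 1)) - X (b - 1) \<le> eps" by (auto simp: is_cluster_def)
    moreover have "Suc (b - 1) = b" using A by (auto simp: is_cluster_def)
    ultimately have False using g by simp }
  with assms ne show False by (metis linorder_neqE_nat)
qed

lemma cluster_exists:
  assumes "1 \<le> k" "X (Suc k) - X k > eps"
  shows "\<exists>j. is_cluster X eps j k"
proof -
  define P where "P = {l. 1 \<le> l \<and> l < k \<and> eps < X (Suc l) - X l}"
  have fP: "finite P" unfolding P_def by auto
  show ?thesis
  proof (cases "P = {}")
    case True
    show ?thesis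
      apply (rule exI[of _ 1])
      using True assms unfolding is_cluster_def P_def by (auto simp: not_less)
  next
    case False
    define j where "j = Suc (Max P)"
    have mP: "Max P \<in> P" using False fP by auto
    have "\<forall>l. j \<le> l \<and> l < k \<longrightarrow> X (Suc l) - X l \<le> eps"
    proof (intro allI impI)
      fix l assume "j \<le> l \<and> l < k"
      then have "l \<notin> P" using Max_ge[OF fP] unfolding j_def by force
      then show "X (Suc l) - X l \<le> eps" using \<open>j \<le> l \<and> l < k\<close> mP
        unfolding P_def j_def by auto
    qed
    then show ?thesis
      apply (intro exI[of _ j])
      using mP assms unfolding is_cluster_def j_def P_def by auto
  qed
qed

lemma beta0_eq:
  "beta0 X eps x = card {k. 1 \<le> k \<and> eps < X (Suc k) - X k \<and> X k + eps \<le> x}"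
proof -
  let ?S = "{(j, k). is_cluster X eps j k \<and> X k + eps \<le> x}"
  have inj: "inj_on snd ?S" using cluster_unique by (auto simp: inj_on_def)
  have img: "snd ` ?S = {k. 1 \<le> k \<and> eps < X (Suc k) - X k \<and> X k + eps \<le> x}"
  proof
    show "snd ` ?S \<subseteq> {k. 1 \<le> k \<and> eps < X (Suc k) - X k \<and> X k + eps \<le> x}" by (auto simp: is_cluster_def)
    show "{k. 1 \<le> k \<and> eps < X (Suc k) - X k \<and> X k + eps \<le> x} \<subseteq> snd ` ?S"
    proof
      fix k assume "k \<in> {k. 1 \<le> k \<and> eps < X (Suc k) - X k \<and> X k + eps \<le> x}"
      then have kk: "1 \<le> k" "eps < X (Suc k) - X k" "X k + eps \<le> x" by auto
      obtain j where "is_cluster X eps j k" using cluster_exists[OF kk(1,2)] by blast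
      with kk show "k \<in> snd ` ?S" by force
    qed
  qed
  show ?thesis unfolding beta0_def using card_image[OF inj] img by simp
qed

lemma poisson_points_diff: "poisson_points T \<omega> (Suc k) - poisson_points T \<omega> k = T k \<omega>"
  by (simp add: poisson_points_def)

definition wt :: "nat \<Rightarrow> nat \<Rightarrow> real" where
  "wt m n = real n ^ m - real (n - 1) ^ m"

lemma wt_nonneg: "0 \<le> wt m n"
  unfolding wt_def by (simp add: power_mono)

lemma telescope:
  fixes L :: "nat set"
  assumes "finite L" and m: "m \<ge> 1"
  shows "(\<Sum>k\<in>L. wt m (card {i\<in>L. i \<le> k})) = real (card L) ^ m"
  using assms(1)
proof (induction L rule: finite_linorder_max_induct)
  show "(\<Sum>k\<in>{}. wt m (card {i\<in>{}. i \<le> k})) = real (card ({}::nat set)) ^ m"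
    using m by (cases m) simp_all
next
  fix b :: nat and A assume 2: "finite A" "\<forall>a\<in>A. a < b"
    "(\<Sum>k\<in>A. wt m (card {i \<in> A. i \<le> k})) = real (card A) ^ m"
  have bA: "b \<notin> A" using 2 by auto
  have e1: "{i \<in> insert b A. i \<le> b} = insert b A" using 2 by auto
  have e2: "k \<in> A \<Longrightarrow> {i \<in> insert b A. i \<le> k} = {i \<in> A. i \<le> k}" for k using 2 by auto
  have "(\<Sum>k\<in>insert b A. wt m (card {i \<in> insert b A. i \<le> k}))
     = wt m (card (insert b A)) + (\<Sum>k\<in>A. wt m (card {i \<in> A. i \<le> k}))"
    using 2 bA e1 e2 by (simp add: sum.insert)
  also have "\<dots> = real (card (insert b A)) ^ m"
    using 2 bA by (simp add: wt_def)
  finally show "(\<Sum>k\<in>insert b A. wt m (card {i \<in> insert b A. i \<le> k})) = real (card (insert b A)) ^ m" .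
qed

lemma finite_K:
  fixes t :: "nat \<Rightarrow> real"
  assumes t: "\<And>i. 0 \<le> t i" and e: "eps > 0"
  shows "finite {k. 1 \<le> k \<and> eps < t k \<and> (\<Sum>i<k. t i) + eps \<le> x}"
proof -
  let ?K = "{k. 1 \<le> k \<and> eps < t k \<and> (\<Sum>i<k. t i) + eps \<le> x}"
  have "card G \<le> nat \<lceil>x / eps\<rceil> + 1" if G: "G \<subseteq> ?K" "finite G" for G
  proof (cases "G = {}")
    case True then show ?thesis by simp
  next
    case False
    define M where "M = Max G"
    have MG: "M \<in> G" using False G unfolding M_def by auto
    have sub: "G - {M} \<subseteq> {..<M}" using G unfolding M_def
      by (auto simp: less_le)
    have "real (card (G - {M})) * eps \<le> (\<Sum>i\<in>G - {M}. t i)"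
      using G by (intro sum_bounded_below) auto
    also have "\<dots> \<le> (\<Sum>i<M. t i)" using sub t by (intro sum_mono2) auto
    also have "\<dots> \<le> x - eps" using MG G by auto
    finally have "real (card G - 1) * eps \<le> x - eps" using MG G by (simp add: card_Diff_singleton)
    then have "real (card G - 1) \<le> x / eps" using e
      by (simp add: field_simps)
    then have "real (card G - 1) \<le> real (nat \<lceil>x / eps\<rceil>)" by linarith
    then show ?thesis by linarith
  qed
  then show ?thesis using finite_if_finite_subsets_card_bdd by blast
qed

lemma power_card_expand:
  fixes t :: "nat \<Rightarrow> real"
  assumes t: "\<And>i. 0 \<le> t i" and e: "eps > 0" and m: "m \<ge> 1"
  shows "real (card {k. 1 \<le> k \<and> eps < t k \<and> (\<Sum>i<k. t i) + eps \<le> x}) ^ m =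
    (\<Sum>k\<in>{k. 1 \<le> k \<and> eps < t k \<and> (\<Sum>i<k. t i) + eps \<le> x}.
        wt m (card {i. 1 \<le> i \<and> i \<le> k \<and> eps < t i}))"
proof -
  let ?K = "{k. 1 \<le> k \<and> eps < t k \<and> (\<Sum>i<k. t i) + eps \<le> x}"
  have fin: "finite ?K" using finite_K[OF t e] .
  have "{i. 1 \<le> i \<and> i \<le> k \<and> eps < t i} = {i \<in> ?K. i \<le> k}" if k: "k \<in> ?K" for k
  proof -
    have "(\<Sum>i<j. t i) \<le> (\<Sum>i<k. t i)" if "j \<le> k" for j
      using that t by (intro sum_mono2) auto
    then show ?thesis using k by force
  qed
  then have "(\<Sum>k\<in>?K. wt m (card {i. 1 \<le> i \<and> i \<le> k \<and> eps < t i}))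
     = (\<Sum>k\<in>?K. wt m (card {i \<in> ?K. i \<le> k}))" by (intro sum.cong) auto
  then show ?thesis using telescope[OF fin m] by simp
qed




lemma exp_tail:
  fixes C \<mu> u :: real
  assumes mu: "\<mu> > 0" and C: "C \<ge> 0"
  shows "(\<integral>\<^sup>+t. ennreal (C * exp (- \<mu> * t)) * indicator {u..} t \<partial>lborel) = ennreal (C / \<mu> * exp (- \<mu> * u))"
proof -
  have "(\<integral>\<^sup>+t. ennreal (C * exp (- \<mu> * t)) * indicator {u..} t \<partial>lborel) =
     ennreal (0 - (- C / \<mu> * exp (- \<mu> * u)))"
  proof (rule nn_integral_FTC_atLeast)
    show "(\<lambda>t. C * exp (- \<mu> * t)) \<in> borel_measurable borel" by measurable
    show "((\<lambda>t. - C / \<mu> * exp (- \<mu> * t)) has_real_derivative C * exp (- \<mu> * x)) (at x)" for x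
      using mu by (auto intro!: derivative_eq_intros)
    show "0 \<le> C * exp (- \<mu> * x)" for x using C by simp
    have "filterlim (\<lambda>t. \<mu> * t) at_top at_top"
      by (rule filterlim_tendsto_pos_mult_at_top[OF tendsto_const mu filterlim_ident])
    then have "filterlim (\<lambda>t. - (\<mu> * t)) at_bot at_top"
      by (simp add: filterlim_uminus_at_bot)
    then have "((\<lambda>t. exp (- (\<mu> * t))) \<longlongrightarrow> 0) at_top"
      by (rule filterlim_compose[OF exp_at_bot])
    then have "((\<lambda>t. - C / \<mu> * exp (- (\<mu> * t))) \<longlongrightarrow> - C / \<mu> * 0) at_top"
      by (intro tendsto_mult tendsto_const)
    then show "((\<lambda>t. - C / \<mu> * exp (- \<mu> * t)) \<longlongrightarrow> 0) at_top" by simp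
  qed
  then show ?thesis by simp
qed

lemma exp_Icc:
  fixes C \<mu> v :: real
  assumes mu: "\<mu> > 0" and C: "C \<ge> 0" and v: "v \<ge> 0"
  shows "(\<integral>\<^sup>+t. ennreal (C * exp (- \<mu> * t)) * indicator {0..v} t \<partial>lborel) = ennreal (C / \<mu> * (1 - exp (- \<mu> * v)))"
proof -
  have "(\<integral>\<^sup>+t\<in>{0..v}. ennreal (C * exp (- \<mu> * t)) \<partial>lborel) =
     ennreal ((- C / \<mu> * exp (- \<mu> * v)) - (- C / \<mu> * exp (- \<mu> * 0)))"
  proof (rule nn_integral_FTC_Icc)
    show "(\<lambda>t. C * exp (- \<mu> * t)) \<in> borel_measurable borel" by measurable
    show "((\<lambda>t. - C / \<mu> * exp (- \<mu> * t)) has_real_derivative C * exp (- \<mu> * x)) (at x)" for x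
      using mu by (auto intro!: derivative_eq_intros)
    show "0 \<le> C * exp (- \<mu> * x)" for x using C by simp
  qed (use v in auto)
  moreover have "(- C / \<mu> * exp (- \<mu> * v)) - (- C / \<mu> * exp (- \<mu> * 0)) = C / \<mu> * (1 - exp (- \<mu> * v))"
    using mu by (simp add: field_simps)
  ultimately show ?thesis by simp
qed

lemma negbin_sums:
  fixes a :: real
  assumes a: "0 \<le> a" "a < 1"
  shows "(\<lambda>n. real ((n + j) choose j) * a ^ n) sums (1 / (1 - a) ^ (Suc j))"
proof -
  have "\<bar>-a\<bar> < 1" using a by simp
  from gen_binomial_real[OF this, of "- (real j + 1)"]
  have "(\<lambda>n. (- (real j + 1) gchoose n) * (-a) ^ n) sums (1 + - a) powr (- (real j + 1))" .
  moreover have "(- (real j + 1) gchoose n) * (-a) ^ n = real ((n + j) choose j) * a ^ n" for n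
  proof -
    have "(- (real j + 1) gchoose n) = (-1) ^ n * ((real j + 1 + real n - 1) gchoose n)"
      by (rule gbinomial_minus)
    also have "(real j + 1 + real n - 1) = real (n + j)" by simp
    also have "(real (n + j) gchoose n) = real ((n + j) choose n)"
      by (simp add: binomial_gbinomial)
    also have "(n + j) choose n = (n + j) choose j"
      using binomial_symmetric[of n "n + j"] by simp
    finally have "(- (real j + 1) gchoose n) = (-1) ^ n * real ((n + j) choose j)" .
    moreover have "(-1::real)^n * (-a)^n = a^n" by (simp add: power_mult_distrib[symmetric])
    ultimately show ?thesis by (metis mult.assoc mult.commute)
  qed
  moreover have "(1 + - a) powr (- (real j + 1)) = 1 / (1 - a) ^ (Suc j)"
  proof -
    have "(1 + - a) powr (- (real j + 1)) = inverse ((1 - a) powr (real (Suc j)))"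
      by (subst powr_minus[symmetric]) (simp add: algebra_simps)
    also have "(1 - a) powr (real (Suc j)) = (1 - a) ^ Suc j"
      using a powr_realpow[of "1 - a" "Suc j"] by simp
    finally show ?thesis by (simp add: divide_inverse)
  qed
  ultimately show ?thesis by simp
qed

lemma negbin_sums_shift:
  fixes a :: real
  assumes a: "0 \<le> a" "a < 1"
  shows "(\<lambda>l. if j < l then real ((l - 1) choose j) * a ^ (l - 1 - j) else 0) sums (1 / (1 - a) ^ (Suc j))"
proof -
  let ?f = "\<lambda>l. if j < l then real ((l - 1) choose j) * a ^ (l - 1 - j) else 0"
  have "(\<lambda>i. ?f (i + Suc j)) = (\<lambda>n. real ((n + j) choose j) * a ^ n)"
    by (auto simp: fun_eq_iff)
  with negbin_sums[OF a, of j] have "(\<lambda>i. ?f (i + Suc j)) sums (1 / (1 - a) ^ (Suc j))" by (simp only:)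
  then have "?f sums (1 / (1 - a) ^ (Suc j) + sum ?f {..<Suc j})" by (rule sums_iff_shift[THEN iffD1])
  moreover have "sum ?f {..<Suc j} = 0" by (intro sum.neutral) auto
  ultimately show ?thesis by simp
qed

lemma summable_pow_geom:
  fixes r :: real
  assumes r: "0 \<le> r" "r < 1"
  shows "summable (\<lambda>n. real n ^ m * r ^ n)"
proof -
  have "conv_radius (\<lambda>n. real (Suc n) ^ m) = ereal 1"
  proof (rule conv_radius_ratio_limit_nonzero)
    show "(\<lambda>n. norm (real (Suc n) ^ m) / norm (real (Suc (Suc n)) ^ m)) \<longlonglongrightarrow> 1"
    proof -
      have "(\<lambda>n. (real (Suc n) / real (Suc (Suc n))) ^ m) \<longlonglongrightarrow> 1 ^ m"
        by (intro tendsto_power) (rule LIMSEQ_Suc[OF LIMSEQ_n_over_Suc_n])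
      then show ?thesis by (simp add: power_divide)
    qed
  qed auto
  then have "summable (\<lambda>n. real (Suc n) ^ m * r ^ n)"
    using r by (intro summable_in_conv_radius) auto
  then have "summable (\<lambda>n. r * (real (Suc n) ^ m * r ^ n))" by (rule summable_mult)
  then have "summable (\<lambda>n. real (Suc n) ^ m * r ^ Suc n)" by (simp add: mult_ac)
  then show ?thesis by (subst summable_Suc_iff[symmetric])
qed




lemma exp_tail_open:
  fixes C \<mu> u :: real
  assumes mu: "\<mu> > 0" and C: "C \<ge> 0"
  shows "(\<integral>\<^sup>+t. ennreal (C * exp (- \<mu> * t)) * indicator {u<..} t \<partial>lborel) = ennreal (C / \<mu> * exp (- \<mu> * u))"
proof -
  have "(\<integral>\<^sup>+t. ennreal (C * exp (- \<mu> * t)) * indicator {u<..} t \<partial>lborel) = (\<integral>\<^sup>+t. ennreal (C * exp (- \<mu> * t)) * indicator {u..} t \<partial>lborel)"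
    by (rule nn_integral_cong_AE, rule eventually_mono[OF AE_lborel_singleton[of u]]) (simp add: indicator_def)
  then show ?thesis using exp_tail[OF mu C] by simp
qed

lemma sum_Pow_card:
  fixes F :: "nat \<Rightarrow> real"
  assumes I: "finite I" and n: "card I < n"
  shows "(\<Sum>B\<in>Pow I. F (card B)) = (\<Sum>j<n. real (card I choose j) * F j)"
proof -
  have "(\<Sum>B\<in>Pow I. F (card B)) = (\<Sum>j<n. \<Sum>B\<in>{B \<in> Pow I. card B = j}. F (card B))"
  proof (rule sum.group[symmetric])
    show "card ` Pow I \<subseteq> {..<n}"
    proof
      fix k assume "k \<in> card ` Pow I"
      then obtain B where "B \<subseteq> I" "k = card B" by auto
      then have "k \<le> card I" using card_mono[OF I] by simp
      then show "k \<in> {..<n}" using n by simp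
    qed
  qed (use I in auto)
  also have "\<dots> = (\<Sum>j<n. real (card I choose j) * F j)"
  proof (intro sum.cong refl)
    fix j
    have "(\<Sum>B\<in>{B \<in> Pow I. card B = j}. F (card B)) = (\<Sum>B\<in>{B. B \<subseteq> I \<and> card B = j}. F j)"
      by (intro sum.cong) auto
    also have "\<dots> = real (card I choose j) * F j" using n_subsets[OF I, of j] by simp
    finally show "(\<Sum>B\<in>{B \<in> Pow I. card B = j}. F (card B)) = real (card I choose j) * F j" .
  qed
  finally show ?thesis .
qed


lemma measurable_card_nat:
  fixes P :: "nat \<Rightarrow> 'a \<Rightarrow> bool"
  assumes P[measurable]: "\<And>k. Measurable.pred N (P k)"
  shows "(\<lambda>\<omega>. card {k. P k \<omega>}) \<in> N \<rightarrow>\<^sub>M count_space UNIV"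
proof -
  define E where "E F = {\<omega>\<in>space N. \<forall>k. P k \<omega> = (k \<in> F)}" for F :: "nat set"
  have E: "E F \<in> sets N" for F unfolding E_def by measurable
  have eq: "(\<lambda>\<omega>. card {k. P k \<omega>}) -` {n} \<inter> space N =
     (\<Union>F\<in>{F. finite F \<and> card F = n}. E F) \<union>
     (if n = 0 then space N - (\<Union>F\<in>{F. finite F}. E F) else {})" for n
  proof (intro equalityI subsetI)
    fix \<omega> assume \<omega>: "\<omega> \<in> (\<lambda>\<omega>. card {k. P k \<omega>}) -` {n} \<inter> space N"
    show "\<omega> \<in> (\<Union>F\<in>{F. finite F \<and> card F = n}. E F) \<union>
     (if n = 0 then space N - (\<Union>F\<in>{F. finite F}. E F) else {})"
    proof (cases "finite {k. P k \<omega>}")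
      case True
      then have "\<omega> \<in> E {k. P k \<omega>}" using \<omega> unfolding E_def by auto
      then show ?thesis using True \<omega> by auto
    next
      case False
      then have "\<omega> \<notin> E F" if "finite F" for F using that unfolding E_def
        by (metis (mono_tags, lifting) mem_Collect_eq set_eqI)
      then show ?thesis using False \<omega> by auto
    qed
  next
    fix \<omega> assume \<omega>: "\<omega> \<in> (\<Union>F\<in>{F. finite F \<and> card F = n}. E F) \<union>
     (if n = 0 then space N - (\<Union>F\<in>{F. finite F}. E F) else {})"
    show "\<omega> \<in> (\<lambda>\<omega>. card {k. P k \<omega>}) -` {n} \<inter> space N"
    proof (cases "\<exists>F\<in>{F. finite F \<and> card F = n}. \<omega> \<in> E F")
      case True
      then obtain F where F: "finite F" "card F = n" "\<omega> \<in> E F" by auto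
      then have "{k. P k \<omega>} = F" unfolding E_def by auto
      then show ?thesis using F unfolding E_def by auto
    next
      case False
      with \<omega> have n: "n = 0" and w: "\<omega> \<in> space N" and nE: "\<And>F. finite F \<Longrightarrow> \<omega> \<notin> E F"
        by (auto split: if_splits)
      have "infinite {k. P k \<omega>}"
      proof
        assume "finite {k. P k \<omega>}"
        from nE[OF this] w show False unfolding E_def by auto
      qed
      then show ?thesis using n w by auto
    qed
  qed
  have c1: "countable {F::nat set. finite F \<and> card F = n}" for n
    by (rule countable_subset[OF _ countable_Collect_finite]) auto
  show ?thesis
    unfolding measurable_count_space_eq2_countable
  proof (intro conjI ballI)
    fix n :: nat
    show "(\<lambda>\<omega>. card {k. P k \<omega>}) -` {n} \<inter> space N \<in> sets N"
      unfolding eq using E c1 countable_Collect_finite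
      by (intro sets.Un sets.countable_UN' sets.Diff) auto
  qed auto
qed

locale clus = prob_space M for M :: "'a measure" +
  fixes T :: "nat \<Rightarrow> 'a \<Rightarrow> real" and lam eps s :: real and m :: nat
  assumes lam: "lam > 0" and epsp: "eps > 0" and sp: "s > 0" and m1: "m \<ge> 1"
    and indep: "indep_vars (\<lambda>_. borel) T UNIV"
    and distr: "\<And>i. distributed M lborel (T i) (\<lambda>x. ennreal (exponential_density lam x))"
begin

lemma T_meas[measurable]: "T i \<in> borel_measurable M"
  using indep unfolding indep_vars_def by auto

lemma AE_nonneg: "AE \<omega> in M. \<forall>i. 0 \<le> T i \<omega>"
  unfolding AE_all_countable
proof
  fix i
  have "(AE \<omega> in M. 0 \<le> T i \<omega>) = (AE x in lborel. 0 < ennreal (exponential_density lam x) \<longrightarrow> 0 \<le> x)"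
    by (rule distributed_AE2[OF distr]) measurable
  also have "\<dots>" by (intro AE_I2) (auto simp: exponential_density_def)
  finally show "AE \<omega> in M. 0 \<le> T i \<omega>" .
qed

definition S :: "nat \<Rightarrow> 'a \<Rightarrow> real" where "S l \<omega> = (\<Sum>i<l. T i \<omega>)"
definition Nc :: "nat \<Rightarrow> 'a \<Rightarrow> nat" where "Nc l \<omega> = card {i. 1 \<le> i \<and> i \<le> l \<and> eps < T i \<omega>}"
definition f :: "nat \<Rightarrow> real \<Rightarrow> 'a \<Rightarrow> real" where
  "f l x \<omega> = (if 1 \<le> l \<and> eps < T l \<omega> \<and> S l \<omega> + eps \<le> x then wt m (Nc l \<omega>) else 0)"

lemma S_meas[measurable]: "S l \<in> borel_measurable M"
  unfolding S_def by measurable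

lemma Nc_meas[measurable]: "Nc l \<in> M \<rightarrow>\<^sub>M count_space UNIV"
  unfolding Nc_def
  by (rule measurable_card_nat) measurable

lemma f_meas: "(\<lambda>(x, \<omega>). f l x \<omega>) \<in> borel_measurable (lborel \<Otimes>\<^sub>M M)"
  unfolding f_def by measurable

lemma f_nonneg: "0 \<le> f l x \<omega>"
  unfolding f_def by (simp add: wt_nonneg)

lemma Y_meas[measurable]: "(\<lambda>\<omega>. real (beta0 (poisson_points T \<omega>) eps x) ^ m) \<in> borel_measurable M"
proof -
  have eq: "beta0 (poisson_points T \<omega>) eps x = card {k. 1 \<le> k \<and> eps < T k \<omega> \<and> S k \<omega> + eps \<le> x}" for \<omega>
    unfolding beta0_eq poisson_points_diff by (simp add: poisson_points_def S_def)
  have "(\<lambda>\<omega>. card {k. 1 \<le> k \<and> eps < T k \<omega> \<and> S k \<omega> + eps \<le> x}) \<in> M \<rightarrow>\<^sub>M count_space UNIV"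
    by (rule measurable_card_nat) measurable
  then show ?thesis unfolding eq by measurable
qed

lemma pointwise:
  assumes nn: "\<And>i. 0 \<le> T i \<omega>"
  shows "ennreal (real (beta0 (poisson_points T \<omega>) eps x) ^ m) = (\<Sum>l. ennreal (f l x \<omega>))"
proof -
  let ?K = "{k. 1 \<le> k \<and> eps < T k \<omega> \<and> (\<Sum>i<k. T i \<omega>) + eps \<le> x}"
  have eq: "beta0 (poisson_points T \<omega>) eps x = card ?K"
    unfolding beta0_eq poisson_points_diff by (simp add: poisson_points_def)
  have fin: "finite ?K" by (rule finite_K[OF nn epsp])
  have "real (card ?K) ^ m = (\<Sum>k\<in>?K. wt m (card {i. 1 \<le> i \<and> i \<le> k \<and> eps < T i \<omega>}))"
    by (rule power_card_expand[OF nn epsp m1])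
  also have "\<dots> = (\<Sum>k\<in>?K. f k x \<omega>)"
    by (intro sum.cong) (auto simp: f_def Nc_def S_def)
  finally have 1: "real (card ?K) ^ m = (\<Sum>k\<in>?K. f k x \<omega>)" .
  have "(\<Sum>l. ennreal (f l x \<omega>)) = (\<Sum>l\<in>?K. ennreal (f l x \<omega>))"
    by (rule suminf_finite[OF fin]) (auto simp: f_def S_def)
  also have "\<dots> = ennreal (\<Sum>l\<in>?K. f l x \<omega>)" by (rule sum_ennreal) (rule f_nonneg)
  finally show ?thesis unfolding eq 1 by simp
qed

lemma f_meas_x: "(\<lambda>\<omega>. f l x \<omega>) \<in> borel_measurable M"
  using measurable_compose[OF measurable_Pair1'[of x lborel M] f_meas] by simp

definition G :: "real \<Rightarrow> ennreal" where
  "G x = (\<integral>\<^sup>+\<omega>. ennreal (real (beta0 (poisson_points T \<omega>) eps x) ^ m) \<partial>M)"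

lemma G_eq: "G x = (\<Sum>l. \<integral>\<^sup>+\<omega>. ennreal (f l x \<omega>) \<partial>M)"
proof -
  have "G x = (\<integral>\<^sup>+\<omega>. (\<Sum>l. ennreal (f l x \<omega>)) \<partial>M)"
    unfolding G_def by (rule nn_integral_cong_AE) (use AE_nonneg pointwise in auto)
  also have "\<dots> = (\<Sum>l. \<integral>\<^sup>+\<omega>. ennreal (f l x \<omega>) \<partial>M)"
    by (rule nn_integral_suminf) (use f_meas_x in simp)
  finally show ?thesis .
qed


lemma f_meas2: "(\<lambda>(\<omega>, x). f l x \<omega>) \<in> borel_measurable (M \<Otimes>\<^sub>M lborel)"
  unfolding f_def by measurable

definition h :: "nat \<Rightarrow> 'a \<Rightarrow> real" where
  "h l \<omega> = (if 1 \<le> l \<and> eps < T l \<omega> then wt m (Nc l \<omega>) * exp (- s * (S l \<omega> + eps)) / s else 0)"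

lemma inner_x:
  assumes nn: "\<And>i. 0 \<le> T i \<omega>"
  shows "(\<integral>\<^sup>+x. ennreal (exp (- s * x)) * indicator {0..} x * ennreal (f l x \<omega>) \<partial>lborel) = ennreal (h l \<omega>)"
proof (cases "1 \<le> l \<and> eps < T l \<omega>")
  case True
  have S0: "0 \<le> S l \<omega>" unfolding S_def using nn by (simp add: sum_nonneg)
  let ?c = "S l \<omega> + eps" and ?W = "wt m (Nc l \<omega>)"
  have "(\<integral>\<^sup>+x. ennreal (exp (- s * x)) * indicator {0..} x * ennreal (f l x \<omega>) \<partial>lborel)
      = (\<integral>\<^sup>+x. ennreal (?W * exp (- s * x)) * indicator {?c..} x \<partial>lborel)"
  proof (intro nn_integral_cong)
    fix x :: real
    show "ennreal (exp (- s * x)) * indicator {0..} x * ennreal (f l x \<omega>) = ennreal (?W * exp (- s * x)) * indicator {?c..} x"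
    proof (cases "?c \<le> x")
      case c: True
      then have x0: "0 \<le> x" using S0 epsp by linarith
      have fx: "f l x \<omega> = ?W" using True c unfolding f_def by simp
      have "ennreal (?W * exp (- s * x)) = ennreal ?W * ennreal (exp (- s * x))"
        by (rule ennreal_mult[OF wt_nonneg exp_ge_zero])
      then show ?thesis using c x0 fx by (simp add: indicator_def mult.commute)
    next
      case c: False
      then have fx: "f l x \<omega> = 0" unfolding f_def by auto
      then show ?thesis using c by (simp add: indicator_def)
    qed
  qed
  also have "\<dots> = ennreal (?W / s * exp (- s * ?c))" by (rule exp_tail[OF sp wt_nonneg])
  also have "\<dots> = ennreal (h l \<omega>)" using True by (simp add: h_def)
  finally show ?thesis .
next
  case False
  then have "\<And>x. f l x \<omega> = 0" by (auto simp: f_def)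
  moreover have "h l \<omega> = 0" using False unfolding h_def by auto
  ultimately show ?thesis by simp
qed

lemma L3_meas: "(\<lambda>(\<omega>, x). ennreal (exp (- s * x)) * indicator {0..} x * ennreal (f l x \<omega>)) \<in> borel_measurable (M \<Otimes>\<^sub>M lborel)"
  unfolding f_def by measurable

lemma L3: "(\<integral>\<^sup>+x. ennreal (exp (- s * x)) * indicator {0..} x * (\<integral>\<^sup>+\<omega>. ennreal (f l x \<omega>) \<partial>M) \<partial>lborel)
   = (\<integral>\<^sup>+\<omega>. ennreal (h l \<omega>) \<partial>M)"
proof -
  interpret PS: pair_sigma_finite M lborel ..
  have "(\<integral>\<^sup>+x. ennreal (exp (- s * x)) * indicator {0..} x * (\<integral>\<^sup>+\<omega>. ennreal (f l x \<omega>) \<partial>M) \<partial>lborel)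
      = (\<integral>\<^sup>+x. (\<integral>\<^sup>+\<omega>. ennreal (exp (- s * x)) * indicator {0..} x * ennreal (f l x \<omega>) \<partial>M) \<partial>lborel)"
  proof (intro nn_integral_cong)
    fix x :: real
    show "ennreal (exp (- s * x)) * indicator {0..} x * (\<integral>\<^sup>+\<omega>. ennreal (f l x \<omega>) \<partial>M) =
       (\<integral>\<^sup>+\<omega>. ennreal (exp (- s * x)) * indicator {0..} x * ennreal (f l x \<omega>) \<partial>M)"
      by (rule nn_integral_cmult[symmetric]) (use f_meas_x in simp)
  qed
  also have "\<dots> = (\<integral>\<^sup>+\<omega>. (\<integral>\<^sup>+x. ennreal (exp (- s * x)) * indicator {0..} x * ennreal (f l x \<omega>) \<partial>lborel) \<partial>M)"
    by (rule PS.Fubini') (rule L3_meas)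
  also have "\<dots> = (\<integral>\<^sup>+\<omega>. ennreal (h l \<omega>) \<partial>M)"
    by (rule nn_integral_cong_AE) (use AE_nonneg inner_x in auto)
  finally show ?thesis .
qed

definition cc :: real where "cc = lam / (lam + s)"
definition q :: real where "q = exp (- lam * eps)"
definition bb :: real where "bb = lam / (lam + s) * exp (- (lam + s) * eps)"
definition aa :: real where "aa = lam / (lam + s) * (1 - exp (- (lam + s) * eps))"

lemma exp_comb: "exp (- lam * t) * exp (- s * t) = exp (- (lam + s) * t)"
  by (subst exp_add[symmetric]) (simp add: algebra_simps)

lemma exp_comb2: "lam * exp (- lam * t) * exp (- s * t) = lam * exp (- (lam + s) * t)"
  by (simp only: mult.assoc exp_comb)

lemma E1:
  assumes [measurable]: "\<phi> \<in> borel_measurable borel" and nn: "\<And>t. 0 \<le> \<phi> t"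
  shows "(\<integral>\<^sup>+\<omega>. ennreal (\<phi> (T i \<omega>)) \<partial>M) = (\<integral>\<^sup>+t. ennreal (lam * exp (- lam * t) * \<phi> t) * indicator {0..} t \<partial>lborel)"
proof -
  have "(\<integral>\<^sup>+\<omega>. ennreal (\<phi> (T i \<omega>)) \<partial>M) = (\<integral>\<^sup>+t. ennreal (exponential_density lam t) * ennreal (\<phi> t) \<partial>lborel)"
    by (rule distributed_nn_integral[OF distr, symmetric]) measurable
  also have "\<dots> = (\<integral>\<^sup>+t. ennreal (lam * exp (- lam * t) * \<phi> t) * indicator {0..} t \<partial>lborel)"
  proof (intro nn_integral_cong)
    fix t :: real
    show "ennreal (exponential_density lam t) * ennreal (\<phi> t) = ennreal (lam * exp (- lam * t) * \<phi> t) * indicator {0..} t"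
    proof (cases "t < 0")
      case True then show ?thesis by (simp add: exponential_density_def)
    next
      case False
      then have "exponential_density lam t = lam * exp (- lam * t)"
        by (simp add: exponential_density_def mult.commute)
      moreover have "ennreal (lam * exp (- lam * t)) * ennreal (\<phi> t) = ennreal (lam * exp (- lam * t) * \<phi> t)"
        using lam nn[of t] by (intro ennreal_mult[symmetric]) auto
      ultimately show ?thesis using False by simp
    qed
  qed
  finally show ?thesis .
qed

lemma E_cc: "(\<integral>\<^sup>+\<omega>. ennreal (exp (- s * T i \<omega>)) \<partial>M) = ennreal cc"
proof -
  have "(\<integral>\<^sup>+\<omega>. ennreal (exp (- s * T i \<omega>)) \<partial>M) = (\<integral>\<^sup>+t. ennreal (lam * exp (- lam * t) * exp (- s * t)) * indicator {0..} t \<partial>lborel)"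
    by (rule E1) auto
  also have "\<dots> = (\<integral>\<^sup>+t. ennreal (lam * exp (- (lam + s) * t)) * indicator {0..} t \<partial>lborel)"
    by (simp only: exp_comb2)
  also have "\<dots> = ennreal (lam / (lam + s) * exp (- (lam + s) * 0))" using lam sp by (intro exp_tail) auto
  also have "\<dots> = ennreal cc" by (simp add: cc_def)
  finally show ?thesis .
qed

lemma E_q: "(\<integral>\<^sup>+\<omega>. ennreal (if eps < T i \<omega> then 1 else 0) \<partial>M) = ennreal q"
proof -
  have "(\<integral>\<^sup>+\<omega>. ennreal (if eps < T i \<omega> then 1 else 0) \<partial>M) = (\<integral>\<^sup>+t. ennreal (lam * exp (- lam * t) * (if eps < t then 1 else 0)) * indicator {0..} t \<partial>lborel)"
    by (rule E1) auto
  also have "\<dots> = (\<integral>\<^sup>+t. ennreal (lam * exp (- lam * t)) * indicator {eps<..} t \<partial>lborel)"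
  proof (intro nn_integral_cong)
    fix t :: real
    show "ennreal (lam * exp (- lam * t) * (if eps < t then 1 else 0)) * indicator {0..} t = ennreal (lam * exp (- lam * t)) * indicator {eps<..} t"
      using epsp by (cases "eps < t") (simp_all add: indicator_def)
  qed
  also have "\<dots> = ennreal (lam / lam * exp (- lam * eps))" using lam by (intro exp_tail_open) auto
  also have "\<dots> = ennreal q" using lam by (simp add: q_def)
  finally show ?thesis .
qed

lemma E_bb: "(\<integral>\<^sup>+\<omega>. ennreal (if eps < T i \<omega> then exp (- s * T i \<omega>) else 0) \<partial>M) = ennreal bb"
proof -
  have "(\<integral>\<^sup>+\<omega>. ennreal (if eps < T i \<omega> then exp (- s * T i \<omega>) else 0) \<partial>M) = (\<integral>\<^sup>+t. ennreal (lam * exp (- lam * t) * (if eps < t then exp (- s * t) else 0)) * indicator {0..} t \<partial>lborel)"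
    by (rule E1) auto
  also have "\<dots> = (\<integral>\<^sup>+t. ennreal (lam * exp (- (lam + s) * t)) * indicator {eps<..} t \<partial>lborel)"
  proof (intro nn_integral_cong)
    fix t :: real
    show "ennreal (lam * exp (- lam * t) * (if eps < t then exp (- s * t) else 0)) * indicator {0..} t = ennreal (lam * exp (- (lam + s) * t)) * indicator {eps<..} t"
    proof (cases "eps < t")
      case True
      then have "(if eps < t then exp (- s * t) else 0) = exp (- s * t)" by simp
      then have "lam * exp (- lam * t) * (if eps < t then exp (- s * t) else 0) = lam * exp (- (lam + s) * t)"
        by (simp only: exp_comb2)
      moreover have "indicator {0..} t = (1::ennreal)" "indicator {eps<..} t = (1::ennreal)"
        using True epsp by auto
      ultimately show ?thesis by (metis mult_1_right)
    next
      case False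
      then show ?thesis by (simp add: indicator_def)
    qed
  qed
  also have "\<dots> = ennreal (lam / (lam + s) * exp (- (lam + s) * eps))" using lam sp by (intro exp_tail_open) auto
  also have "\<dots> = ennreal bb" by (simp add: bb_def)
  finally show ?thesis .
qed

lemma E_aa: "(\<integral>\<^sup>+\<omega>. ennreal (if eps < T i \<omega> then 0 else exp (- s * T i \<omega>)) \<partial>M) = ennreal aa"
proof -
  have "(\<integral>\<^sup>+\<omega>. ennreal (if eps < T i \<omega> then 0 else exp (- s * T i \<omega>)) \<partial>M) = (\<integral>\<^sup>+t. ennreal (lam * exp (- lam * t) * (if eps < t then 0 else exp (- s * t))) * indicator {0..} t \<partial>lborel)"
    by (rule E1) auto
  also have "\<dots> = (\<integral>\<^sup>+t. ennreal (lam * exp (- (lam + s) * t)) * indicator {0..eps} t \<partial>lborel)"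
  proof (intro nn_integral_cong)
    fix t :: real
    show "ennreal (lam * exp (- lam * t) * (if eps < t then 0 else exp (- s * t))) * indicator {0..} t = ennreal (lam * exp (- (lam + s) * t)) * indicator {0..eps} t"
    proof (cases "eps < t")
      case False
      then have "(if eps < t then 0 else exp (- s * t)) = exp (- s * t)" by simp
      then have "lam * exp (- lam * t) * (if eps < t then 0 else exp (- s * t)) = lam * exp (- (lam + s) * t)"
        by (simp only: exp_comb2)
      moreover have "indicator {0..} t = (indicator {0..eps} t :: ennreal)"
        using False by (auto simp: indicator_def)
      ultimately show ?thesis by metis
    next
      case True
      then show ?thesis by (simp add: indicator_def)
    qed
  qed
  also have "\<dots> = ennreal (lam / (lam + s) * (1 - exp (- (lam + s) * eps)))" using lam sp epsp by (intro exp_Icc) auto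
  also have "\<dots> = ennreal aa" by (simp add: aa_def)
  finally show ?thesis .
qed

end



context clus begin

definition g :: "nat \<Rightarrow> nat set \<Rightarrow> nat \<Rightarrow> real \<Rightarrow> real" where
  "g l B i t = (if i = 0 then exp (- s * t) else if i = l then (if eps < t then 1 else 0)
     else if i \<in> B then (if eps < t then exp (- s * t) else 0) else (if eps < t then 0 else exp (- s * t)))"

lemma g_nonneg: "0 \<le> g l B i t"
  unfolding g_def by auto

lemma g_meas: "g l B i \<in> borel_measurable borel"
proof -
  have "g l B i = (if i = 0 then (\<lambda>t. exp (- s * t)) else if i = l then (\<lambda>t. if eps < t then 1 else 0)
     else if i \<in> B then (\<lambda>t. if eps < t then exp (- s * t) else 0) else (\<lambda>t. if eps < t then 0 else exp (- s * t)))"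
    by (auto simp: g_def fun_eq_iff)
  then show ?thesis by simp
qed

lemma aa_nn: "0 \<le> aa"
proof -
  have "- (lam + s) * eps \<le> 0" using lam sp epsp by (intro mult_nonpos_nonneg) auto
  then have "exp (- (lam + s) * eps) \<le> 1" by simp
  then have "0 \<le> 1 - exp (- (lam + s) * eps)" by linarith
  moreover have "0 \<le> lam / (lam + s)" using lam sp by simp
  ultimately show ?thesis unfolding aa_def by (rule mult_nonneg_nonneg[rotated])
qed

lemma bb_nn: "0 \<le> bb" unfolding bb_def using lam sp by simp

lemma Eg:
  assumes l: "1 \<le> l" and i: "i \<le> l"
  shows "(\<integral>\<^sup>+\<omega>. ennreal (g l B i (T i \<omega>)) \<partial>M) = ennreal (if i = 0 then cc else if i = l then q else if i \<in> B then bb else aa)"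
proof -
  consider "i = 0" | "i \<noteq> 0" "i = l" | "i \<noteq> 0" "i \<noteq> l" "i \<in> B" | "i \<noteq> 0" "i \<noteq> l" "i \<notin> B" by blast
  then show ?thesis
  proof cases
    case 1 then show ?thesis using E_cc[of i] by (simp add: g_def)
  next
    case 2 then show ?thesis using E_q[of i] by (simp add: g_def)
  next
    case 3 then show ?thesis using E_bb[of i] by (simp add: g_def)
  next
    case 4 then show ?thesis using E_aa[of i] by (simp add: g_def)
  qed
qed

lemma PW:
  assumes l: "1 \<le> l"
  shows "(if eps < T l \<omega> then wt m (Nc l \<omega>) * exp (- s * S l \<omega>) else 0)
    = (\<Sum>B\<in>Pow {1..<l}. wt m (Suc (card B)) * (\<Prod>i\<in>{0..l}. g l B i (T i \<omega>)))"
proof -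
  let ?I = "{1..<l}"
  have dec: "{0..l} = insert 0 (insert l ?I)" using l by auto
  have n0: "0 \<notin> insert l ?I" using l by auto
  have nl: "l \<notin> ?I" by auto
  show ?thesis
  proof (cases "eps < T l \<omega>")
    case False
    have zeroF: "(\<Prod>i\<in>{0..l}. g l B i (T i \<omega>)) = 0" for B
    proof -
      have "g l B l (T l \<omega>) = 0" using False l by (simp add: g_def)
      then show ?thesis by (intro prod_zero) (use l in auto)
    qed
    have "(\<Sum>B\<in>Pow ?I. wt m (Suc (card B)) * (\<Prod>i\<in>{0..l}. g l B i (T i \<omega>))) = 0"
      by (simp only: zeroF mult_zero_right sum.neutral_const)
    then show ?thesis using False by simp
  next
    case True
    define B0 where "B0 = {i \<in> ?I. eps < T i \<omega>}"
    have B0: "B0 \<in> Pow ?I" unfolding B0_def by auto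
    have zero: "(\<Prod>i\<in>{0..l}. g l B i (T i \<omega>)) = 0" if B: "B \<in> Pow ?I" "B \<noteq> B0" for B
    proof -
      have "\<exists>i\<in>?I. (i \<in> B) \<noteq> (i \<in> B0)"
      proof (rule ccontr)
        assume "\<not> (\<exists>i\<in>?I. (i \<in> B) \<noteq> (i \<in> B0))"
        then have "B = B0" using B(1) B0 by blast
        with B(2) show False ..
      qed
      then obtain i where i: "i \<in> ?I" "(i \<in> B) \<noteq> (i \<in> B0)" by blast
      then have "g l B i (T i \<omega>) = 0" unfolding B0_def g_def by auto
      moreover have "i \<in> {0..l}" using i by auto
      ultimately show ?thesis by (intro prod_zero) auto
    qed
    have "(\<Sum>B\<in>Pow ?I. wt m (Suc (card B)) * (\<Prod>i\<in>{0..l}. g l B i (T i \<omega>)))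
        = wt m (Suc (card B0)) * (\<Prod>i\<in>{0..l}. g l B0 i (T i \<omega>))"
    proof -
      have "(\<Sum>B\<in>Pow ?I. wt m (Suc (card B)) * (\<Prod>i\<in>{0..l}. g l B i (T i \<omega>)))
         = wt m (Suc (card B0)) * (\<Prod>i\<in>{0..l}. g l B0 i (T i \<omega>))
           + (\<Sum>B\<in>Pow ?I - {B0}. wt m (Suc (card B)) * (\<Prod>i\<in>{0..l}. g l B i (T i \<omega>)))"
        using B0 by (subst sum.remove) auto
      also have "(\<Sum>B\<in>Pow ?I - {B0}. wt m (Suc (card B)) * (\<Prod>i\<in>{0..l}. g l B i (T i \<omega>))) = 0"
        using zero by (intro sum.neutral) auto
      finally show ?thesis by simp
    qed
    also have "(\<Prod>i\<in>{0..l}. g l B0 i (T i \<omega>)) = exp (- s * T 0 \<omega>) * (\<Prod>i\<in>?I. exp (- s * T i \<omega>))"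
    proof -
      have "(\<Prod>i\<in>{0..l}. g l B0 i (T i \<omega>)) = g l B0 0 (T 0 \<omega>) * (g l B0 l (T l \<omega>) * (\<Prod>i\<in>?I. g l B0 i (T i \<omega>)))"
        unfolding dec using n0 nl by (simp add: prod.insert)
      also have "(\<Prod>i\<in>?I. g l B0 i (T i \<omega>)) = (\<Prod>i\<in>?I. exp (- s * T i \<omega>))"
        by (intro prod.cong refl) (auto simp: g_def B0_def)
      finally show ?thesis using True l by (simp add: g_def)
    qed
    also have "exp (- s * T 0 \<omega>) * (\<Prod>i\<in>?I. exp (- s * T i \<omega>)) = exp (- s * S l \<omega>)"
    proof -
      have "{..<l} = insert 0 ?I" using l by auto
      then have "S l \<omega> = T 0 \<omega> + (\<Sum>i\<in>?I. T i \<omega>)" unfolding S_def by simp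
      then have eqS: "- s * S l \<omega> = - s * T 0 \<omega> + (\<Sum>i\<in>?I. - s * T i \<omega>)"
        by (simp add: algebra_simps sum_distrib_left)
      show ?thesis by (simp only: eqS exp_add exp_sum[OF finite_atLeastLessThan])
    qed
    also have "Suc (card B0) = Nc l \<omega>"
    proof -
      have "{i. 1 \<le> i \<and> i \<le> l \<and> eps < T i \<omega>} = insert l B0"
        using True l unfolding B0_def by auto
      moreover have "l \<notin> B0" "finite B0" unfolding B0_def by auto
      ultimately show ?thesis unfolding Nc_def by simp
    qed
    finally show ?thesis using True by simp
  qed
qed

lemma indep_g: "indep_vars (\<lambda>_. borel) (\<lambda>i \<omega>. ennreal (g l B i (T i \<omega>))) {0..l}"
proof -
  have "indep_vars (\<lambda>_. borel) T {0..l}" by (rule indep_vars_subset[OF indep]) auto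
  then show ?thesis
    by (rule indep_vars_compose2) (use g_meas in simp)
qed

lemma E_l:
  assumes l: "1 \<le> l"
  shows "(\<integral>\<^sup>+\<omega>. ennreal (if eps < T l \<omega> then wt m (Nc l \<omega>) * exp (- s * S l \<omega>) else 0) \<partial>M)
    = ennreal (cc * q * (\<Sum>j<l. real ((l - 1) choose j) * (wt m (Suc j) * bb ^ j * aa ^ (l - 1 - j))))"
proof -
  let ?I = "{1..<l}"
  define val where "val B i = (if i = 0 then cc else if i = l then q else if i \<in> B then bb else aa)" for B i
  have val_nn: "0 \<le> val B i" for B i
    unfolding val_def using aa_nn bb_nn lam sp by (auto simp: cc_def q_def)
  have "(\<integral>\<^sup>+\<omega>. ennreal (if eps < T l \<omega> then wt m (Nc l \<omega>) * exp (- s * S l \<omega>) else 0) \<partial>M)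
     = (\<integral>\<^sup>+\<omega>. (\<Sum>B\<in>Pow ?I. ennreal (wt m (Suc (card B))) * (\<Prod>i\<in>{0..l}. ennreal (g l B i (T i \<omega>)))) \<partial>M)"
  proof (intro nn_integral_cong)
    fix \<omega>
    have "ennreal (if eps < T l \<omega> then wt m (Nc l \<omega>) * exp (- s * S l \<omega>) else 0)
       = ennreal (\<Sum>B\<in>Pow ?I. wt m (Suc (card B)) * (\<Prod>i\<in>{0..l}. g l B i (T i \<omega>)))"
      by (simp only: PW[OF l])
    also have "\<dots> = (\<Sum>B\<in>Pow ?I. ennreal (wt m (Suc (card B)) * (\<Prod>i\<in>{0..l}. g l B i (T i \<omega>))))"
      by (rule sum_ennreal[symmetric]) (simp add: wt_nonneg g_nonneg prod_nonneg)
    also have "\<dots> = (\<Sum>B\<in>Pow ?I. ennreal (wt m (Suc (card B))) * (\<Prod>i\<in>{0..l}. ennreal (g l B i (T i \<omega>))))"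
      by (intro sum.cong refl) (simp add: ennreal_mult wt_nonneg g_nonneg prod_nonneg prod_ennreal)
    finally show "ennreal (if eps < T l \<omega> then wt m (Nc l \<omega>) * exp (- s * S l \<omega>) else 0)
       = (\<Sum>B\<in>Pow ?I. ennreal (wt m (Suc (card B))) * (\<Prod>i\<in>{0..l}. ennreal (g l B i (T i \<omega>))))" .
  qed
  also have "\<dots> = (\<Sum>B\<in>Pow ?I. \<integral>\<^sup>+\<omega>. ennreal (wt m (Suc (card B))) * (\<Prod>i\<in>{0..l}. ennreal (g l B i (T i \<omega>))) \<partial>M)"
  proof (rule nn_integral_sum)
    fix B
    have "(\<lambda>\<omega>. g l B i (T i \<omega>)) \<in> borel_measurable M" for i
      using measurable_compose[OF T_meas g_meas] by simp
    then show "(\<lambda>\<omega>. ennreal (wt m (Suc (card B))) * (\<Prod>i\<in>{0..l}. ennreal (g l B i (T i \<omega>)))) \<in> borel_measurable M"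
      by measurable
  qed
  also have "\<dots> = (\<Sum>B\<in>Pow ?I. ennreal (wt m (Suc (card B))) * (\<Prod>i\<in>{0..l}. ennreal (val B i)))"
  proof (intro sum.cong refl)
    fix B
    have m: "(\<lambda>\<omega>. g l B i (T i \<omega>)) \<in> borel_measurable M" for i
      using measurable_compose[OF T_meas g_meas] by simp
    have "(\<integral>\<^sup>+\<omega>. ennreal (wt m (Suc (card B))) * (\<Prod>i\<in>{0..l}. ennreal (g l B i (T i \<omega>))) \<partial>M)
       = ennreal (wt m (Suc (card B))) * (\<integral>\<^sup>+\<omega>. (\<Prod>i\<in>{0..l}. ennreal (g l B i (T i \<omega>))) \<partial>M)"
      by (rule nn_integral_cmult) (use m in measurable)
    also have "(\<integral>\<^sup>+\<omega>. (\<Prod>i\<in>{0..l}. ennreal (g l B i (T i \<omega>))) \<partial>M)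
       = (\<Prod>i\<in>{0..l}. \<integral>\<^sup>+\<omega>. ennreal (g l B i (T i \<omega>)) \<partial>M)"
      by (rule indep_vars_nn_integral[OF _ indep_g]) auto
    also have "\<dots> = (\<Prod>i\<in>{0..l}. ennreal (val B i))"
      by (intro prod.cong refl) (use l Eg in \<open>auto simp: val_def\<close>)
    finally show "(\<integral>\<^sup>+\<omega>. ennreal (wt m (Suc (card B))) * (\<Prod>i\<in>{0..l}. ennreal (g l B i (T i \<omega>))) \<partial>M)
       = ennreal (wt m (Suc (card B))) * (\<Prod>i\<in>{0..l}. ennreal (val B i))" .
  qed
  also have "\<dots> = (\<Sum>B\<in>Pow ?I. ennreal (wt m (Suc (card B)) * (\<Prod>i\<in>{0..l}. val B i)))"
    by (intro sum.cong refl) (simp add: prod_ennreal val_nn ennreal_mult wt_nonneg prod_nonneg)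
  also have "\<dots> = ennreal (\<Sum>B\<in>Pow ?I. wt m (Suc (card B)) * (\<Prod>i\<in>{0..l}. val B i))"
    by (rule sum_ennreal) (simp add: val_nn wt_nonneg prod_nonneg)
  also have "(\<Sum>B\<in>Pow ?I. wt m (Suc (card B)) * (\<Prod>i\<in>{0..l}. val B i))
     = (\<Sum>B\<in>Pow ?I. cc * q * (wt m (Suc (card B)) * bb ^ card B * aa ^ (l - 1 - card B)))"
  proof (intro sum.cong refl)
    fix B assume B: "B \<in> Pow ?I"
    have dec: "{0..l} = insert 0 (insert l ?I)" using l by auto
    have "(\<Prod>i\<in>{0..l}. val B i) = val B 0 * (val B l * (\<Prod>i\<in>?I. val B i))"
      unfolding dec using l by (simp add: prod.insert)
    also have "(\<Prod>i\<in>?I. val B i) = (\<Prod>i\<in>?I. if i \<in> B then bb else aa)"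
      by (intro prod.cong refl) (auto simp: val_def)
    also have "\<dots> = bb ^ card B * aa ^ (l - 1 - card B)"
    proof -
      have "?I \<inter> {i. i \<in> B} = B" "?I \<inter> - {i. i \<in> B} = ?I - B" using B by auto
      moreover have "card (?I - B) = l - 1 - card B"
        using B by (subst card_Diff_subset) (auto intro: finite_subset)
      ultimately show ?thesis by (simp add: prod.If_cases)
    qed
    finally show "wt m (Suc (card B)) * (\<Prod>i\<in>{0..l}. val B i) = cc * q * (wt m (Suc (card B)) * bb ^ card B * aa ^ (l - 1 - card B))"
      using l by (simp add: val_def)
  qed
  also have "\<dots> = cc * q * (\<Sum>B\<in>Pow ?I. wt m (Suc (card B)) * bb ^ card B * aa ^ (l - 1 - card B))"
    by (simp add: sum_distrib_left)
  also have "(\<Sum>B\<in>Pow ?I. wt m (Suc (card B)) * bb ^ card B * aa ^ (l - 1 - card B))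
     = (\<Sum>j<l. real (card ?I choose j) * (wt m (Suc j) * bb ^ j * aa ^ (l - 1 - j)))"
    by (rule sum_Pow_card[where F="\<lambda>j. wt m (Suc j) * bb ^ j * aa ^ (l - 1 - j)"]) (use l in auto)
  finally show ?thesis by simp
qed

end



lemma suminf_swap_ennreal:
  fixes f :: "nat \<Rightarrow> nat \<Rightarrow> ennreal"
  shows "(\<Sum>i. \<Sum>j. f i j) = (\<Sum>j. \<Sum>i. f i j)"
proof -
  interpret PS: pair_sigma_finite "count_space (UNIV::nat set)" "count_space (UNIV::nat set)"
    by (intro pair_sigma_finite.intro sigma_finite_measure_count_space)
  have m: "case_prod f \<in> borel_measurable (count_space UNIV \<Otimes>\<^sub>M count_space UNIV)"
    by (simp add: pair_measure_countable)
  have "(\<Sum>i. \<Sum>j. f i j) = (\<integral>\<^sup>+i. \<integral>\<^sup>+j. f i j \<partial>count_space UNIV \<partial>count_space UNIV)"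
    by (simp add: nn_integral_count_space_nat)
  also have "\<dots> = (\<integral>\<^sup>+j. \<integral>\<^sup>+i. f i j \<partial>count_space UNIV \<partial>count_space UNIV)"
    by (rule PS.Fubini'[symmetric]) (rule m)
  also have "\<dots> = (\<Sum>j. \<Sum>i. f i j)"
    by (simp add: nn_integral_count_space_nat)
  finally show ?thesis .
qed

context clus begin

definition K0 :: real where "K0 = exp (- s * eps) / s * cc * q"

definition R :: "nat \<Rightarrow> real" where
  "R l = K0 * (\<Sum>j<l. real ((l - 1) choose j) * (wt m (Suc j) * bb ^ j * aa ^ (l - 1 - j)))"

lemma K0_nn: "0 \<le> K0" unfolding K0_def cc_def q_def using lam sp by simp

lemma h_int: "(\<integral>\<^sup>+\<omega>. ennreal (h l \<omega>) \<partial>M) = ennreal (R l)"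
proof (cases "l = 0")
  case True
  then show ?thesis by (simp add: h_def R_def)
next
  case False
  then have l: "1 \<le> l" by simp
  let ?E = "\<lambda>\<omega>. if eps < T l \<omega> then wt m (Nc l \<omega>) * exp (- s * S l \<omega>) else 0"
  have pw: "ennreal (h l \<omega>) = ennreal (exp (- s * eps) / s) * ennreal (?E \<omega>)" for \<omega>
  proof -
    have h_eq: "h l \<omega> = exp (- s * eps) / s * ?E \<omega>"
      using l by (simp add: h_def exp_add[symmetric] algebra_simps)
    have nnE: "0 \<le> ?E \<omega>" by (simp add: wt_nonneg)
    have nnA: "0 \<le> exp (- s * eps) / s" using sp by simp
    show ?thesis unfolding h_eq by (rule ennreal_mult[OF nnA nnE])
  qed
  have mE: "(\<lambda>\<omega>. ennreal (?E \<omega>)) \<in> borel_measurable M" by measurable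
  have "(\<integral>\<^sup>+\<omega>. ennreal (h l \<omega>) \<partial>M) = ennreal (exp (- s * eps) / s) * (\<integral>\<^sup>+\<omega>. ennreal (?E \<omega>) \<partial>M)"
    unfolding pw by (rule nn_integral_cmult[OF mE])
  also have "\<dots> = ennreal (exp (- s * eps) / s) * ennreal (cc * q * (\<Sum>j<l. real ((l - 1) choose j) * (wt m (Suc j) * bb ^ j * aa ^ (l - 1 - j))))"
    by (simp only: E_l[OF l])
  also have "\<dots> = ennreal (R l)"
    unfolding R_def K0_def using sp lam aa_nn bb_nn
    by (simp add: ennreal_mult[symmetric] wt_nonneg sum_nonneg cc_def q_def mult_ac)
  finally show ?thesis .
qed

lemma f_meas_enn: "(\<lambda>(x, \<omega>). ennreal (f l x \<omega>)) \<in> borel_measurable (lborel \<Otimes>\<^sub>M M)"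
  using measurable_compose[OF f_meas measurable_ennreal] by (simp add: split_beta')

lemma V_enn: "(\<integral>\<^sup>+x. ennreal (exp (- s * x)) * indicator {0..} x * G x \<partial>lborel) = (\<Sum>l. ennreal (R l))"
proof -
  have mx: "(\<lambda>x. \<integral>\<^sup>+\<omega>. ennreal (f l x \<omega>) \<partial>M) \<in> borel_measurable lborel" for l
    by (rule borel_measurable_nn_integral) (use f_meas_enn in simp)
  have "(\<integral>\<^sup>+x. ennreal (exp (- s * x)) * indicator {0..} x * G x \<partial>lborel)
     = (\<integral>\<^sup>+x. (\<Sum>l. ennreal (exp (- s * x)) * indicator {0..} x * (\<integral>\<^sup>+\<omega>. ennreal (f l x \<omega>) \<partial>M)) \<partial>lborel)"
    by (simp add: G_eq)
  also have "\<dots> = (\<Sum>l. \<integral>\<^sup>+x. ennreal (exp (- s * x)) * indicator {0..} x * (\<integral>\<^sup>+\<omega>. ennreal (f l x \<omega>) \<partial>M) \<partial>lborel)"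
    by (rule nn_integral_suminf) (use mx in measurable)
  also have "\<dots> = (\<Sum>l. ennreal (R l))"
    by (simp only: L3 h_int)
  finally show ?thesis .
qed

end



context clus begin

lemma aa_lt1: "aa < 1"
proof -
  have "0 < exp (- (lam + s) * eps)" by simp
  then have "1 - exp (- (lam + s) * eps) \<le> 1" by simp
  moreover have "lam / (lam + s) < 1" "0 \<le> lam / (lam + s)" using lam sp by auto
  ultimately have "lam / (lam + s) * (1 - exp (- (lam + s) * eps)) \<le> lam / (lam + s)"
    by (intro mult_left_le) auto
  then show ?thesis unfolding aa_def using \<open>lam / (lam + s) < 1\<close> by linarith
qed

definition rr :: real where "rr = bb / (1 - aa)"

definition ee :: real where "ee = exp (- (lam + s) * eps)"

definition NN :: real where "NN = lam * ee"
definition DD :: real where "DD = s + NN"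

lemma ee_pos: "0 < ee" unfolding ee_def by simp
lemma NN_pos: "0 < NN" unfolding NN_def using lam ee_pos by simp
lemma DD_pos: "0 < DD" unfolding DD_def using sp NN_pos by simp
lemma ls_pos: "0 < lam + s" using lam sp by simp

lemma one_minus_aa: "1 - aa = DD / (lam + s)"
  using lam sp unfolding aa_def DD_def NN_def ee_def[symmetric] by (simp add: field_simps)

lemma bb_eq: "bb = NN / (lam + s)"
  unfolding bb_def NN_def ee_def by simp

lemma rr_eq: "rr = NN / DD"
proof -
  have "rr = (NN / (lam + s)) / (DD / (lam + s))" unfolding rr_def one_minus_aa bb_eq ..
  also have "\<dots> = NN / DD" using ls_pos by simp
  finally show ?thesis .
qed

lemma rr_pos: "0 < rr" unfolding rr_eq using NN_pos DD_pos by simp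
lemma rr_lt1: "rr < 1" unfolding rr_eq using NN_pos DD_pos sp by (simp add: DD_def)

lemma K0_eq: "K0 / (1 - aa) = rr / s"
proof -
  have k1: "exp (- s * eps) * exp (- lam * eps) = ee"
    unfolding ee_def by (subst exp_add[symmetric]) (simp add: algebra_simps)
  have "K0 = (exp (- s * eps) * exp (- lam * eps)) * lam / (s * (lam + s))"
    unfolding K0_def cc_def q_def using lam sp by (simp add: field_simps)
  then have "K0 = NN / (s * (lam + s))" unfolding k1 NN_def by (simp add: mult.commute)
  then have "K0 / (1 - aa) = (NN / (s * (lam + s))) / (DD / (lam + s))" unfolding one_minus_aa by simp
  also have "\<dots> = (NN / DD) / s"
  proof -
    have gen: "\<And>c::real. c > 0 \<Longrightarrow> (NN / (s * c)) / (DD / c) = (NN / DD) / s"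
      using sp DD_pos by (simp add: field_simps)
    show ?thesis by (rule gen[OF ls_pos])
  qed
  finally show ?thesis unfolding rr_eq by simp
qed

lemma alpha_eq:
  "exp (eps * lam) / lam * s * exp (eps * s) = s / NN"
proof -
  have k2: "exp (eps * lam) * exp (eps * s) * ee = 1"
    unfolding ee_def by (simp add: exp_add[symmetric] algebra_simps)
  then have X: "exp (eps * lam) * exp (eps * s) = 1 / ee" using ee_pos by (simp add: field_simps)
  have "exp (eps * lam) / lam * s * exp (eps * s) = (exp (eps * lam) * exp (eps * s)) * s / lam"
    by simp
  also have "\<dots> = (1 / ee) * s / lam" by (simp only: X)
  also have "\<dots> = s / NN" unfolding NN_def by simp
  finally show ?thesis .
qed

definition PP :: real where "PP = (\<Sum>k. real (Suc k) ^ m * rr ^ Suc k)"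

lemma polylog_eq: "polylog (- real m) rr = PP"
  unfolding polylog_def PP_def
proof (intro arg_cong[where f=suminf] ext)
  fix k
  have "real (Suc k) powr (- real m) = inverse (real (Suc k) ^ m)"
    by (simp add: powr_minus powr_realpow)
  then show "rr ^ Suc k / real (Suc k) powr - real m = real (Suc k) ^ m * rr ^ Suc k"
    by (simp add: divide_inverse)
qed

lemma series_j:
  "(\<lambda>j. K0 * (wt m (Suc j) * bb ^ j) * (1 / (1 - aa) ^ Suc j)) sums (rr / s * (PP / rr - PP))"
proof -
  have su: "summable (\<lambda>n. real n ^ m * rr ^ n)"
    by (rule summable_pow_geom) (use rr_pos rr_lt1 in auto)
  then have su1: "summable (\<lambda>k. real (Suc k) ^ m * rr ^ Suc k)"
    using summable_Suc_iff[of "\<lambda>n. real n ^ m * rr ^ n"] by simp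
  then have s1: "(\<lambda>k. real (Suc k) ^ m * rr ^ Suc k) sums PP" unfolding PP_def by (rule summable_sums)
  have A: "(\<lambda>j. real (Suc j) ^ m * rr ^ j) sums (PP / rr)"
  proof -
    have "(\<lambda>k. (1 / rr) * (real (Suc k) ^ m * rr ^ Suc k)) sums ((1 / rr) * PP)"
      by (rule sums_mult[OF s1])
    moreover have "(1 / rr) * (real (Suc k) ^ m * rr ^ Suc k) = real (Suc k) ^ m * rr ^ k" for k
      using rr_pos by simp
    ultimately show ?thesis by simp
  qed
  have B: "(\<lambda>j. real j ^ m * rr ^ j) sums PP"
  proof -
    have "(\<lambda>i. real (i + 1) ^ m * rr ^ (i + 1)) sums PP" using s1 by simp
    then have "(\<lambda>j. real j ^ m * rr ^ j) sums (PP + (\<Sum>i<1. real i ^ m * rr ^ i))"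
      by (rule sums_iff_shift[THEN iffD1])
    moreover have "(0::real) ^ m = 0" using m1 by (simp add: power_0_left)
    ultimately show ?thesis by simp
  qed
  have C: "(\<lambda>j. real (Suc j) ^ m * rr ^ j - real j ^ m * rr ^ j) sums (PP / rr - PP)"
    by (rule sums_diff[OF A B])
  have D: "(\<lambda>j. rr / s * (real (Suc j) ^ m * rr ^ j - real j ^ m * rr ^ j)) sums (rr / s * (PP / rr - PP))"
    by (rule sums_mult[OF C])
  have eq: "K0 * (wt m (Suc j) * bb ^ j) * (1 / (1 - aa) ^ Suc j) = rr / s * (real (Suc j) ^ m * rr ^ j - real j ^ m * rr ^ j)" for j
  proof -
    have a1: "1 - aa > 0" using aa_lt1 by simp
    have "K0 * (wt m (Suc j) * bb ^ j) * (1 / (1 - aa) ^ Suc j) = (K0 / (1 - aa)) * (wt m (Suc j) * (bb / (1 - aa)) ^ j)"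
      using a1 by (simp add: power_divide field_simps)
    also have "\<dots> = rr / s * (wt m (Suc j) * rr ^ j)" unfolding K0_eq rr_def ..
    also have "\<dots> = rr / s * (real (Suc j) ^ m * rr ^ j - real j ^ m * rr ^ j)"
      by (simp add: wt_def algebra_simps)
    finally show ?thesis .
  qed
  show ?thesis unfolding eq by (rule D)
qed

lemma Vr_eq: "rr / s * (PP / rr - PP) =
    (let \<alpha> = exp (eps * lam) / lam * s * exp (eps * s) in \<alpha> / (s * (\<alpha> + 1)) * polylog (- real m) (1 / (\<alpha> + 1)))"
proof -
  have r0: "s / NN + 1 = DD / NN" unfolding DD_def using NN_pos by (simp add: field_simps)
  have r1: "1 / (s / NN + 1) = rr"
    unfolding rr_eq r0 using NN_pos DD_pos by simp
  have r2: "s / NN / (s * (s / NN + 1)) = 1 / DD"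
    unfolding r0 using NN_pos sp DD_pos by (simp add: field_simps)
  have r3: "rr / s * (PP / rr - PP) = 1 / DD * PP"
  proof -
    have "rr / s * (PP / rr - PP) = PP * (1 - rr) / s" using rr_pos sp by (simp add: field_simps)
    also have "1 - rr = s / DD" unfolding rr_eq DD_def using NN_pos sp by (simp add: field_simps)
    finally show ?thesis using sp by simp
  qed
  show ?thesis
    unfolding Let_def alpha_eq r1 r2 polylog_eq r3 ..
qed

lemma R_sums: "(\<Sum>l. ennreal (R l)) = ennreal (rr / s * (PP / rr - PP))"
proof -
  define F where "F j l = K0 * (wt m (Suc j) * bb ^ j) * (if j < l then real ((l - 1) choose j) * aa ^ (l - 1 - j) else 0)" for j l
  have Fnn: "0 \<le> F j l" for j l
    unfolding F_def using K0_nn aa_nn bb_nn by (simp add: wt_nonneg)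
  have "ennreal (R l) = (\<Sum>j. ennreal (F j l))" for l
  proof -
    have "R l = (\<Sum>j<l. F j l)"
      unfolding R_def F_def by (simp add: sum_distrib_left algebra_simps)
    then have "ennreal (R l) = (\<Sum>j<l. ennreal (F j l))" by (simp add: Fnn)
    also have "\<dots> = (\<Sum>j. ennreal (F j l))"
      by (rule suminf_finite[symmetric]) (auto simp: F_def)
    finally show ?thesis .
  qed
  then have "(\<Sum>l. ennreal (R l)) = (\<Sum>l. \<Sum>j. ennreal (F j l))" by simp
  also have "\<dots> = (\<Sum>j. \<Sum>l. ennreal (F j l))" by (rule suminf_swap_ennreal)
  also have "\<dots> = (\<Sum>j. ennreal (K0 * (wt m (Suc j) * bb ^ j) * (1 / (1 - aa) ^ Suc j)))"
  proof (intro arg_cong[where f=suminf] ext)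
    fix j
    have "(\<lambda>l. K0 * (wt m (Suc j) * bb ^ j) * (if j < l then real ((l - 1) choose j) * aa ^ (l - 1 - j) else 0))
       sums (K0 * (wt m (Suc j) * bb ^ j) * (1 / (1 - aa) ^ Suc j))"
      by (rule sums_mult[OF negbin_sums_shift]) (use aa_nn aa_lt1 in auto)
    then show "(\<Sum>l. ennreal (F j l)) = ennreal (K0 * (wt m (Suc j) * bb ^ j) * (1 / (1 - aa) ^ Suc j))"
      unfolding F_def by (rule suminf_ennreal_eq[rotated]) (use Fnn in \<open>simp add: F_def\<close>)
  qed
  also have "\<dots> = ennreal (rr / s * (PP / rr - PP))"
    by (rule suminf_ennreal_eq[OF _ series_j]) (use K0_nn bb_nn aa_lt1 in \<open>simp add: wt_nonneg\<close>)
  finally show ?thesis .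
qed

lemma Vr_nn: "0 \<le> rr / s * (PP / rr - PP)"
proof -
  have "0 \<le> PP" unfolding PP_def
    using summable_pow_geom[of rr m] rr_pos rr_lt1 summable_Suc_iff[of "\<lambda>n. real n ^ m * rr ^ n"]
    by (intro suminf_nonneg) auto
  have "rr / s * (PP / rr - PP) = PP * (1 - rr) / s" using rr_pos sp by (simp add: field_simps)
  then show ?thesis using \<open>0 \<le> PP\<close> rr_lt1 sp by simp
qed

end



context clus begin

lemma G_meas: "G \<in> borel_measurable lborel"
proof -
  have mx: "(\<lambda>x. \<integral>\<^sup>+\<omega>. ennreal (f l x \<omega>) \<partial>M) \<in> borel_measurable lborel" for l
    by (rule borel_measurable_nn_integral) (use f_meas_enn in simp)
  have "G = (\<lambda>x. \<Sum>l. \<integral>\<^sup>+\<omega>. ennreal (f l x \<omega>) \<partial>M)" by (simp add: G_eq fun_eq_iff)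
  then show ?thesis using mx by simp
qed

lemma Mom_eq: "expectation (\<lambda>\<omega>. real (beta0 (poisson_points T \<omega>) eps x) ^ m) = enn2real (G x)"
  unfolding G_def by (rule integral_eq_nn_integral[OF Y_meas]) simp

lemma main:
  "((\<lambda>x. exp (- s * x) * expectation (\<lambda>\<omega>. real (beta0 (poisson_points T \<omega>) eps x) ^ m))
     has_integral (rr / s * (PP / rr - PP))) {0..}"
proof -
  let ?V = "rr / s * (PP / rr - PP)"
  define F where "F x = (if x \<in> {0..} then exp (- s * x) * enn2real (G x) else 0)" for x :: real
  have Vint: "(\<integral>\<^sup>+x. ennreal (exp (- s * x)) * indicator {0..} x * G x \<partial>lborel) = ennreal ?V"
    using V_enn R_sums by simp
  have Hm: "(\<lambda>x. ennreal (exp (- s * x)) * indicator {0..} x * G x) \<in> borel_measurable lborel"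
    using G_meas by measurable
  have AEfin: "AE x in lborel. ennreal (exp (- s * x)) * indicator {0..} x * G x \<noteq> \<infinity>"
    by (rule nn_integral_PInf_AE[OF Hm]) (unfold Vint, simp)
  have "(F has_integral ?V) UNIV"
  proof (rule nn_integral_has_integral)
    show "F \<in> borel_measurable borel"
    proof -
      have "F \<in> borel_measurable lborel" unfolding F_def using G_meas by measurable
      then show ?thesis by simp
    qed
    show "0 \<le> F x" for x unfolding F_def by simp
    show "0 \<le> ?V" by (rule Vr_nn)
    have "(\<integral>\<^sup>+x. ennreal (F x) \<partial>lborel) = (\<integral>\<^sup>+x. ennreal (exp (- s * x)) * indicator {0..} x * G x \<partial>lborel)"
    proof (rule nn_integral_cong_AE, rule eventually_mono[OF AEfin])
      fix x assume fin: "ennreal (exp (- s * x)) * indicator {0..} x * G x \<noteq> \<infinity>"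
      show "ennreal (F x) = ennreal (exp (- s * x)) * indicator {0..} x * G x"
      proof (cases "0 \<le> x")
        case True
        then have "ennreal (exp (- s * x)) * G x \<noteq> \<infinity>" using fin by simp
        then have "G x \<noteq> \<infinity>" by (auto simp: ennreal_mult_eq_top_iff)
        then have "ennreal (enn2real (G x)) = G x" by (simp add: less_top)
        then show ?thesis using True unfolding F_def
          by (simp add: ennreal_mult'')
      next
        case False
        then show ?thesis unfolding F_def by simp
      qed
    qed
    then show "(\<integral>\<^sup>+x. ennreal (F x) \<partial>lborel) = ennreal ?V" using Vint by simp
  qed
  then have "((\<lambda>x. if x \<in> {0..} then exp (- s * x) * enn2real (G x) else 0) has_integral ?V) UNIV"
    unfolding F_def .
  then have "((\<lambda>x. exp (- s * x) * enn2real (G x)) has_integral ?V) {0..}"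
    by (rule has_integral_restrict_UNIV[THEN iffD1])
  then show ?thesis by (simp add: Mom_eq)
qed

end

theorem corollary3:
  fixes M :: "'a measure" and T :: "nat \<Rightarrow> 'a \<Rightarrow> real"
    and lam eps s :: real and m :: nat
  assumes "prob_space M"
    and "lam > 0" and "eps > 0" and "s > 0" and "m \<ge> 1"
    and "prob_space.indep_vars M (\<lambda>_. borel) T UNIV"
    and "\<And>i. distributed M lborel (T i) (exponential_density lam)"
  shows "let \<alpha> = exp (eps * lam) / lam * s * exp (eps * s);
             Mom = (\<lambda>x. prob_space.expectation M
                       (\<lambda>\<omega>. real (beta0 (poisson_points T \<omega>) eps x) ^ m))
         in ((\<lambda>x. exp (- s * x) * Mom x) has_integral
               (\<alpha> / (s * (\<alpha> + 1)) * polylog (- real m) (1 / (\<alpha> + 1)))) {0..}"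
proof -
  interpret C: clus M T lam eps s m
    by (rule clus.intro[OF assms(1)], unfold_locales) (use assms in auto)
  have "((\<lambda>x. exp (- s * x) * prob_space.expectation M (\<lambda>\<omega>. real (beta0 (poisson_points T \<omega>) eps x) ^ m))
      has_integral (C.rr / s * (C.PP / C.rr - C.PP))) {0..}"
    by (rule C.main)
  then show ?thesis unfolding C.Vr_eq by (simp add: Let_def)
qed


end
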